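(* Let $p\ge 2$ be an integer. For all $\mathbf r=(r_1,r_2)\in\mathbb Z^2$, \[ {\rm coeff}_{\left[\zeta_1^{r_1},\,\zeta_{2}^{r_2}\right]} F(\zeta_1,\zeta_2;q)=\mathbb{G}_{\mathbf{r}}(\tau). \]
   Context: $q:=e^{2\pi i\tau}$, $\tau\in\mathbb H$. $Q(\mathbf n):=n_1^2+n_2^2-n_1n_2$; $\mathbb N=\{1,2,3,\dots\}$. \begin{align*} F(\zeta_1,\zeta_2;q)&:=\sum_{n_1,n_2\in\mathbb Z}\frac{q^{pQ\left(n_1-\frac1p,\,n_2-\frac1p\right)}}{\left(1-\zeta_1^{-1}\right)\left(1-\zeta_2^{-1}\right)\left(1-\zeta_1^{-1}\zeta_2^{-1}\right)}\Big(\zeta_1^{n_1-1} \zeta_2^{n_2-1} -\zeta_1^{-n_1+n_2-1}\zeta_2^{n_2-1}\\ &\qquad-\zeta_1^{n_1-1}\zeta_2^{-n_2+n_1-1}+\zeta_1^{-n_2-1} \zeta_2^{-n_2+n_1-1}+\zeta_1^{-n_1+n_2-1} \zeta_2^{-n_1-1}-\zeta_1^{-n_2-1}\zeta_2^{-n_1-1}\Big), \end{align*} where each summand is a Laurent polynomial in $\zeta_1,\zeta_2$, and ${\rm coeff}_{[\zeta_1^{r_1},\zeta_2^{r_2}]}$ is the coefficient of $\zeta_1^{r_1}\zeta_2^{r_2}$. For $\boldsymbol\lambda\in\mathbb Q^2$, \begin{multline*} \mathbb{G}_{\boldsymbol{\lambda}}(\tau):=\sum_{\mathbf{n} \in \mathbb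 N^2} {\rm min}(n_1,n_2)\,q^{p Q\left(\mathbf n+\boldsymbol{\lambda}- \left(\frac1p, \frac1p\right)\right)} \Big(1-q^{2\left(n_1+\lambda_1\right)-\left(n_2+\lambda_2\right)}-q^{2\left(n_2+\lambda_2\right)-\left(n_1+\lambda_1\right)}\\+q^{3\left(n_1+\lambda_1\right)}+q^{3\left(n_2+\lambda_2\right)}-q^{2\left(n_1+\lambda_1\right)+2\left(n_2+\lambda_2\right)}\Big). \end{multline*} *)

theory Defs
  imports "HOL-Analysis.Analysis"
begin

text \<open>Fractional powers of the nome: \<open>q^x := e^{2 \<pi> i \<tau> x}\<close> for real \<open>x\<close>.\<close>
definition qpow :: "complex \<Rightarrow> real \<Rightarrow> complex" where
  "qpow \<tau> x = exp (2 * of_real pi * \<i> * \<tau> * of_real x)"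

definition Qf :: "real \<Rightarrow> real \<Rightarrow> real" where
  "Qf x y = x^2 + y^2 - x * y"

text \<open>Laurent polynomials in \<open>\<zeta>1, \<zeta>2\<close> with integer coefficients are represented by
  finitely supported coefficient functions \<open>int \<times> int \<Rightarrow> int\<close>
  (the value at \<open>(a,b)\<close> is the coefficient of \<open>\<zeta>1^a \<zeta>2^b\<close>).\<close>
definition laurent :: "(int \<times> int \<Rightarrow> int) \<Rightarrow> bool" where
  "laurent L \<longleftrightarrow> finite {k. L k \<noteq> 0}"

text \<open>Multiplication by \<open>(1 - \<zeta>1^{-1})\<close>, \<open>(1 - \<zeta>2^{-1})\<close>, \<open>(1 - \<zeta>1^{-1}\<zeta>2^{-1})\<close>.\<close>
definition mul1 :: "(int \<times> int \<Rightarrow> int) \<Rightarrow> int \<times> int \<Rightarrow> int" where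
  "mul1 L = (\<lambda>(a,b). L (a,b) - L (a+1,b))"
definition mul2 :: "(int \<times> int \<Rightarrow> int) \<Rightarrow> int \<times> int \<Rightarrow> int" where
  "mul2 L = (\<lambda>(a,b). L (a,b) - L (a,b+1))"
definition mul12 :: "(int \<times> int \<Rightarrow> int) \<Rightarrow> int \<times> int \<Rightarrow> int" where
  "mul12 L = (\<lambda>(a,b). L (a,b) - L (a+1,b+1))"

definition mul_den :: "(int \<times> int \<Rightarrow> int) \<Rightarrow> int \<times> int \<Rightarrow> int" where
  "mul_den L = mul1 (mul2 (mul12 L))"

definition monom2 :: "int \<times> int \<Rightarrow> int \<times> int \<Rightarrow> int" where
  "monom2 e = (\<lambda>k. if k = e then 1 else 0)"

definition numF :: "int \<times> int \<Rightarrow> int \<times> int \<Rightarrow> int" where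
  "numF n = (let n1 = fst n; n2 = snd n in
     (\<lambda>k. monom2 (n1 - 1, n2 - 1) k
        - monom2 (-n1 + n2 - 1, n2 - 1) k
        - monom2 (n1 - 1, -n2 + n1 - 1) k
        + monom2 (-n2 - 1, -n2 + n1 - 1) k
        + monom2 (-n1 + n2 - 1, -n1 - 1) k
        - monom2 (-n2 - 1, -n1 - 1) k))"

definition summandF :: "int \<times> int \<Rightarrow> int \<times> int \<Rightarrow> int" where
  "summandF n = (THE L. laurent L \<and> mul_den L = numF n)"

definition coeffF :: "int \<Rightarrow> complex \<Rightarrow> int \<times> int \<Rightarrow> complex" where
  "coeffF p \<tau> r = (\<Sum>\<^sub>\<infinity>n\<in>(UNIV :: (int \<times> int) set).
      qpow \<tau> (of_int p * Qf (of_int (fst n) - 1 / of_int p) (of_int (snd n) - 1 / of_int p))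
      * of_int (summandF n r))"

definition GG :: "int \<Rightarrow> real \<times> real \<Rightarrow> complex \<Rightarrow> complex" where
  "GG p lam \<tau> = (\<Sum>\<^sub>\<infinity>n\<in>{n :: int \<times> int. fst n \<ge> 1 \<and> snd n \<ge> 1}.
      (let x = of_int (fst n) + fst lam; y = of_int (snd n) + snd lam in
        of_int (min (fst n) (snd n))
        * qpow \<tau> (of_int p * Qf (x - 1 / of_int p) (y - 1 / of_int p))
        * (1 - qpow \<tau> (2 * x - y) - qpow \<tau> (2 * y - x)
             + qpow \<tau> (3 * x) + qpow \<tau> (3 * y) - qpow \<tau> (2 * x + 2 * y))))"

end

theory Submission
  imports Defs
begin

definition Kf :: "int \<Rightarrow> int \<Rightarrow> int" where
  "Kf a b = (if 0 \<le> a \<and> 0 \<le> b then min a b + 1 else 0)"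

definition Ke :: "int \<times> int \<Rightarrow> int \<times> int \<Rightarrow> int" where
  "Ke e r = Kf (fst e - fst r) (snd e - snd r)"

lemma Kf_id: "Kf u v - Kf (u-1) v - Kf u (v-1) + Kf (u-1) (v-1) - Kf (u-1) (v-1) + Kf (u-2) (v-1) + Kf (u-1) (v-2) - Kf (u-2) (v-2) = (if u = 0 \<and> v = 0 then 1 else 0)"
  unfolding Kf_def by (auto simp: min_def)

lemma mul_den_Ke: "mul_den (Ke e) = monom2 e"
proof (rule ext, clarify)
  fix a b
  obtain u v where e: "e = (u + a, v + b)" by (rule that[of "fst e - a" "snd e - b"]) simp
  show "mul_den (Ke e) (a,b) = monom2 e (a,b)"
    using Kf_id[of u v]
    by (simp add: e mul_den_def mul1_def mul2_def mul12_def Ke_def monom2_def algebra_simps)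
qed

definition sh :: "int \<times> int \<Rightarrow> int \<times> int" where "sh v = (fst v - 1, snd v - 1)"
definition s2 :: "int \<times> int \<Rightarrow> int \<times> int" where "s2 v = (snd v - fst v, snd v)"
definition s3 :: "int \<times> int \<Rightarrow> int \<times> int" where "s3 v = (fst v, fst v - snd v)"
definition s4 :: "int \<times> int \<Rightarrow> int \<times> int" where "s4 v = (- snd v, fst v - snd v)"
definition s5 :: "int \<times> int \<Rightarrow> int \<times> int" where "s5 v = (snd v - fst v, - fst v)"
definition s6 :: "int \<times> int \<Rightarrow> int \<times> int" where "s6 v = (- snd v, - fst v)"

definition Lp :: "int \<times> int \<Rightarrow> int \<times> int \<Rightarrow> int" where
  "Lp n r = Ke (sh n) r - Ke (sh (s2 n)) r - Ke (sh (s3 n)) r + Ke (sh (s4 n)) r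
            + Ke (sh (s5 n)) r - Ke (sh (s6 n)) r"

lemma mul_den_add: "mul_den (\<lambda>k. f k + g k) = (\<lambda>k. mul_den f k + mul_den g k)"
  by (auto simp: mul_den_def mul1_def mul2_def mul12_def fun_eq_iff)
lemma mul_den_diff: "mul_den (\<lambda>k. f k - g k) = (\<lambda>k. mul_den f k - mul_den g k)"
  by (auto simp: mul_den_def mul1_def mul2_def mul12_def fun_eq_iff)

lemma numF_eq: "numF n = (\<lambda>k. monom2 (sh n) k - monom2 (sh (s2 n)) k - monom2 (sh (s3 n)) k
   + monom2 (sh (s4 n)) k + monom2 (sh (s5 n)) k - monom2 (sh (s6 n)) k)"
  by (cases n) (simp add: numF_def sh_def s2_def s3_def s4_def s5_def s6_def algebra_simps)

lemma mul_den_Lp: "mul_den (Lp n) = numF n"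
proof -
  have "Lp n = (\<lambda>k. Ke (sh n) k - Ke (sh (s2 n)) k - Ke (sh (s3 n)) k + Ke (sh (s4 n)) k
            + Ke (sh (s5 n)) k - Ke (sh (s6 n)) k)" by (simp add: Lp_def fun_eq_iff)
  then show ?thesis by (simp add: mul_den_add mul_den_diff mul_den_Ke numF_eq)
qed


lemma Lp_expl: "Lp (a,b) (x,y) = Kf (a-1-x) (b-1-y) - Kf (b-a-1-x) (b-1-y) - Kf (a-1-x) (a-b-1-y)
   + Kf (-b-1-x) (a-b-1-y) + Kf (b-a-1-x) (-a-1-y) - Kf (-b-1-x) (-a-1-y)"
  by (simp add: Lp_def Ke_def sh_def s2_def s3_def s4_def s5_def s6_def algebra_simps)

lemma Kf_neg1: "u < 0 \<Longrightarrow> Kf u v = 0" and Kf_neg2: "v < 0 \<Longrightarrow> Kf u v = 0"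
  by (auto simp: Kf_def)
lemma Kf_R3: "0 \<le> u \<Longrightarrow> v \<le> u \<Longrightarrow> Kf u v = (if 0 \<le> v then v + 1 else 0)"
  by (auto simp: Kf_def min_def)
lemma Kf_R4: "0 \<le> v \<Longrightarrow> u \<le> v \<Longrightarrow> Kf u v = (if 0 \<le> u then u + 1 else 0)"
  by (auto simp: Kf_def min_def)
lemma Kf_R5: "0 \<le> v \<Longrightarrow> 0 \<le> u \<Longrightarrow> Kf u v = min u v + 1"
  by (auto simp: Kf_def min_def)

lemma Lp_zero:
  fixes a b x y :: int
  assumes "\<not> (\<bar>x\<bar> \<le> 2*(\<bar>a\<bar>+\<bar>b\<bar>) + 1 \<and> \<bar>y\<bar> \<le> 2*(\<bar>a\<bar>+\<bar>b\<bar>) + 1)"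
  shows "Lp (a,b) (x,y) = 0"
proof -
  define B where "B = \<bar>a\<bar>+\<bar>b\<bar>"
  have ab: "a \<le> B" "-a \<le> B" "b \<le> B" "-b \<le> B" "a - b \<le> B" "b - a \<le> B" "0 \<le> B"
    unfolding B_def by arith+
  have c: "x \<ge> B \<or> y \<ge> B \<or> (x \<le> -B-1 \<and> y - x \<ge> B) \<or> (y \<le> -B-1 \<and> x - y \<ge> B) \<or> (x \<le> -B-1 \<and> y \<le> -B-1)"
    using assms unfolding B_def[symmetric] by arith
  show ?thesis unfolding Lp_expl
  proof -
    consider "x \<ge> B" | "y \<ge> B" | "x \<le> -B-1 \<and> y - x \<ge> B" | "y \<le> -B-1 \<and> x - y \<ge> B" | "x \<le> -B-1 \<and> y \<le> -B-1"
      using c by blast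
    then show "Kf (a-1-x) (b-1-y) - Kf (b-a-1-x) (b-1-y) - Kf (a-1-x) (a-b-1-y)
   + Kf (-b-1-x) (a-b-1-y) + Kf (b-a-1-x) (-a-1-y) - Kf (-b-1-x) (-a-1-y) = 0"
    proof cases
      case 1 then show ?thesis using ab by (simp add: Kf_neg1)
    next
      case 2 then show ?thesis using ab by (simp add: Kf_neg2)
    next
      case 3 then show ?thesis using ab by (simp add: Kf_R3)
    next
      case 4 then show ?thesis using ab by (simp add: Kf_R4)
    next
      case 5 then show ?thesis using ab by (simp add: Kf_R5 min_def)
    qed
  qed
qed

lemma laurent_Lp: "laurent (Lp n)"
proof -
  obtain a b where n: "n = (a,b)" by (cases n)
  define M where "M = 2*(\<bar>a\<bar>+\<bar>b\<bar>) + 1"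
  have "{k. Lp n k \<noteq> 0} \<subseteq> {-M..M} \<times> {-M..M}"
  proof clarify
    fix x y assume "Lp n (x,y) \<noteq> 0"
    then have "\<bar>x\<bar> \<le> M \<and> \<bar>y\<bar> \<le> M" using Lp_zero[of x a b y] n M_def by auto
    then show "x \<in> {-M..M} \<and> y \<in> {-M..M}" by auto
  qed
  then show ?thesis unfolding laurent_def by (rule finite_subset) auto
qed


definition ub :: "(int \<times> int \<Rightarrow> int) \<Rightarrow> bool" where
  "ub f \<longleftrightarrow> (\<exists>A B. \<forall>a b. f (a,b) \<noteq> 0 \<longrightarrow> a \<le> A \<and> b \<le> B)"

lemma ub_laurent: assumes "laurent L" shows "ub L"
proof -
  let ?S = "{k. L k \<noteq> 0}"
  have f: "finite ?S" using assms by (simp add: laurent_def)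
  have "bdd_above (fst ` ?S)" "bdd_above (snd ` ?S)" using f by auto
  then obtain A B where "\<forall>x\<in>fst ` ?S. x \<le> A" "\<forall>x\<in>snd ` ?S. x \<le> B"
    unfolding bdd_above_def by blast
  then show ?thesis unfolding ub_def by (intro exI[of _ A] exI[of _ B]) force
qed

lemma ub_Lp: "ub (Lp n)"
proof -
  obtain a b where n: "n = (a,b)" by (cases n)
  show ?thesis unfolding ub_def n
    by (rule exI[of _ "\<bar>a\<bar>+\<bar>b\<bar>"], rule exI[of _ "\<bar>a\<bar>+\<bar>b\<bar>"])
       (auto simp: Lp_expl Kf_def split: if_splits)
qed

lemma ub_diff: "ub f \<Longrightarrow> ub g \<Longrightarrow> ub (\<lambda>k. f k - g k)"
  unfolding ub_def
  apply clarify
  subgoal for A B A' B' by (rule exI[of _ "max A B"], rule exI[of _ "max A' B'"]) (metis diff_0_right diff_self max.coboundedI1 max.coboundedI2)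
  done

lemma ub_mul12: assumes "ub f" shows "ub (mul12 f)"
proof -
  obtain A B where AB: "\<forall>a b. f (a,b) \<noteq> 0 \<longrightarrow> a \<le> A \<and> b \<le> B" using assms ub_def by blast
  have "mul12 f (a,b) \<noteq> 0 \<longrightarrow> a \<le> A \<and> b \<le> B" for a b
    using AB[rule_format, of a b] AB[rule_format, of "a+1" "b+1"] by (cases "f (a,b) = 0") (auto simp: mul12_def)
  then show ?thesis unfolding ub_def by blast
qed
lemma ub_mul2: assumes "ub f" shows "ub (mul2 f)"
proof -
  obtain A B where AB: "\<forall>a b. f (a,b) \<noteq> 0 \<longrightarrow> a \<le> A \<and> b \<le> B" using assms ub_def by blast
  have "mul2 f (a,b) \<noteq> 0 \<longrightarrow> a \<le> A \<and> b \<le> B" for a b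
    using AB[rule_format, of a b] AB[rule_format, of "a" "b+1"] by (cases "f (a,b) = 0") (auto simp: mul2_def)
  then show ?thesis unfolding ub_def by blast
qed

lemma ub_mul1_zero: assumes "ub f" "mul1 f = (\<lambda>_. 0)" shows "f = (\<lambda>_. 0)"
proof (rule ext, clarify)
  fix a b
  obtain A B where AB: "\<forall>a b. f (a,b) \<noteq> 0 \<longrightarrow> a \<le> A \<and> b \<le> B" using assms(1) ub_def by blast
  have st: "f (a,b) = f (a + 1, b)" for a b using fun_cong[OF assms(2), of "(a,b)"] by (simp add: mul1_def)
  have "f (a,b) = f (a + int k, b)" for k
    by (induction k) (auto simp: st[of "a + int _"] algebra_simps)
  from this[of "nat (A + 1 - a)"] AB show "f (a,b) = 0"
    by (cases "a \<le> A + 1") force+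
qed

lemma ub_mul2_zero: assumes "ub f" "mul2 f = (\<lambda>_. 0)" shows "f = (\<lambda>_. 0)"
proof (rule ext, clarify)
  fix a b
  obtain A B where AB: "\<forall>a b. f (a,b) \<noteq> 0 \<longrightarrow> a \<le> A \<and> b \<le> B" using assms(1) ub_def by blast
  have st: "f (a,b) = f (a, b + 1)" for a b using fun_cong[OF assms(2), of "(a,b)"] by (simp add: mul2_def)
  have "f (a,b) = f (a, b + int k)" for k
    by (induction k) (auto simp: st[of _ "b + int _"] algebra_simps)
  from this[of "nat (B + 1 - b)"] AB show "f (a,b) = 0"
    by (cases "b \<le> B + 1") force+
qed

lemma ub_mul12_zero: assumes "ub f" "mul12 f = (\<lambda>_. 0)" shows "f = (\<lambda>_. 0)"
proof (rule ext, clarify)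
  fix a b
  obtain A B where AB: "\<forall>a b. f (a,b) \<noteq> 0 \<longrightarrow> a \<le> A \<and> b \<le> B" using assms(1) ub_def by blast
  have st: "f (a,b) = f (a + 1, b + 1)" for a b using fun_cong[OF assms(2), of "(a,b)"] by (simp add: mul12_def)
  have "f (a,b) = f (a + int k, b + int k)" for k
    by (induction k) (auto simp: st[of "a + int _" "b + int _"] algebra_simps)
  from this[of "nat (A + 1 - a)"] AB show "f (a,b) = 0"
    by (cases "a \<le> A + 1") force+
qed

lemma ub_mul_den_zero: assumes "ub f" "mul_den f = (\<lambda>_. 0)" shows "f = (\<lambda>_. 0)"
  using assms unfolding mul_den_def
  by (meson ub_mul12 ub_mul2 ub_mul1_zero ub_mul2_zero ub_mul12_zero)

lemma summandF_eq: "summandF n = Lp n"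
  unfolding summandF_def
proof (rule the_equality)
  show "laurent (Lp n) \<and> mul_den (Lp n) = numF n" using laurent_Lp mul_den_Lp by auto
next
  fix L assume L: "laurent L \<and> mul_den L = numF n"
  have "ub (\<lambda>k. L k - Lp n k)" using ub_diff ub_laurent ub_Lp L by blast
  moreover have "mul_den (\<lambda>k. L k - Lp n k) = (\<lambda>_. 0)"
    by (simp add: mul_den_diff L mul_den_Lp)
  ultimately have "(\<lambda>k. L k - Lp n k) = (\<lambda>_. 0)" by (rule ub_mul_den_zero)
  then show "L = Lp n" by (simp add: fun_eq_iff)
qed


lemma norm_qpow: "norm (qpow \<tau> x) = exp (- 2 * pi * Im \<tau> * x)"
  by (simp add: qpow_def norm_exp_eq_Re)

definition S2 :: "(int \<times> int) set" where "S2 = {n. fst n \<ge> 1 \<and> snd n \<ge> 1}"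

lemma geom_has_sum: "norm (z::real) < 1 \<Longrightarrow> ((\<lambda>j. z ^ j) has_sum (1 / (1 - z))) UNIV"
  by (rule norm_summable_imp_has_sum) (auto simp: geometric_sums power_abs intro: summable_geometric)

lemma bound_summable:
  fixes c :: real assumes c: "c > 0"
  shows "(\<lambda>m. real_of_int (fst m) * exp (- c * fst m) * exp (- c * snd m)) summable_on S2"
proof -
  define z where "z = exp (- c)"
  have z: "0 < z" "z < 1" using c by (auto simp: z_def)
  have e: "exp (- c * real_of_int (int i + 1)) = z ^ Suc i" for i
  proof -
    have "exp (- c * real_of_int (int i + 1)) = exp (of_nat (Suc i) * (- c))" by (simp add: algebra_simps)
    then show ?thesis unfolding exp_of_nat_mult z_def .
  qed
  have e': "exp (- (c * real_of_int a)) = z * z ^ nat (a - 1)" if "1 \<le> a" for a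
  proof -
    have "a = int (nat (a - 1)) + 1" using that by simp
    then have "exp (- (c * real_of_int a)) = exp (- c * real_of_int (int (nat (a - 1)) + 1))"
      by (metis mult_minus_left)
    also have "\<dots> = z ^ Suc (nat (a - 1))" by (rule e)
    finally show ?thesis by simp
  qed
  define f where "f = (\<lambda>(i::nat,j::nat). (real (Suc i) * z ^ Suc i * z) * z ^ j)"
  have inner: "((\<lambda>j. f (i,j)) has_sum ((real (Suc i) * z ^ Suc i * z) * (1 / (1 - z)))) UNIV" for i
    unfolding f_def using has_sum_cmult_right[OF geom_has_sum[of z]] z by simp
  have "summable (\<lambda>i. real (Suc i) * z ^ i)"
    using geometric_deriv_sums[of z] z sums_summable by auto
  then have "(\<lambda>i. real (Suc i) * z ^ i) summable_on UNIV"
    by (subst summable_on_UNIV_nonneg_real_iff) (use z in auto)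
  then have "(\<lambda>i. real (Suc i) * z ^ i * (z * z / (1 - z))) summable_on UNIV"
    by (rule summable_on_cmult_left)
  then have g: "(\<lambda>i. (real (Suc i) * z ^ Suc i * z) * (1 / (1 - z))) summable_on UNIV"
    by (simp add: algebra_simps)
  have "f summable_on Sigma UNIV (\<lambda>_. UNIV)"
    by (rule summable_on_SigmaI[OF inner g]) (use z in \<open>auto simp: f_def\<close>)
  then have fs: "f summable_on UNIV" by simp
  show ?thesis
  proof (subst summable_on_reindex_bij_witness[where i = "\<lambda>(i,j). (int i + 1, int j + 1)"
        and j = "\<lambda>(a,b). (nat (a - 1), nat (b - 1))" and T = UNIV and h = f])
    show "f summable_on UNIV" by (rule fs)
  qed (auto simp: S2_def f_def e e' algebra_simps)
qed


definition wi :: "complex \<Rightarrow> int \<Rightarrow> int \<times> int \<Rightarrow> complex" where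
  "wi \<tau> p v = qpow \<tau> (of_int p * Qf (of_int (fst v) - 1 / of_int p) (of_int (snd v) - 1 / of_int p))"

definition good :: "(int \<times> int \<Rightarrow> int \<times> int) \<Rightarrow> bool" where
  "good t \<longleftrightarrow> (\<forall>v. Qf (of_int (fst (t v))) (of_int (snd (t v))) = Qf (of_int (fst v)) (of_int (snd v))
      \<and> \<bar>fst (t v)\<bar> + \<bar>snd (t v)\<bar> \<le> 2 * (\<bar>fst v\<bar> + \<bar>snd v\<bar>))"

lemma expo_bound:
  fixes p :: int
  assumes p: "p \<ge> 2" and t: "good t"
  shows "of_int p * Qf (of_int (fst (t v)) - 1 / of_int p) (of_int (snd (t v)) - 1 / of_int p)
     \<ge> \<bar>real_of_int (fst v)\<bar> + \<bar>real_of_int (snd v)\<bar> - 9/2"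
proof -
  define P where "P = real_of_int p"
  define X where "X = real_of_int (fst (t v))"
  define Y where "Y = real_of_int (snd (t v))"
  define a where "a = real_of_int (fst v)"
  define b where "b = real_of_int (snd v)"
  have P: "P \<ge> 2" using p by (simp add: P_def)
  have id: "P * Qf (X - 1/P) (Y - 1/P) = P * Qf X Y - X - Y + 1/P"
    using P by (simp add: Qf_def field_simps power2_eq_square)
  have QQ: "Qf X Y = Qf a b" using t unfolding good_def X_def Y_def a_def b_def by blast
  have ab: "\<bar>fst (t v)\<bar> + \<bar>snd (t v)\<bar> \<le> 2 * (\<bar>fst v\<bar> + \<bar>snd v\<bar>)" using t unfolding good_def by blast
  then have "real_of_int (\<bar>fst (t v)\<bar> + \<bar>snd (t v)\<bar>) \<le> real_of_int (2 * (\<bar>fst v\<bar> + \<bar>snd v\<bar>))"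
    by (rule of_int_le_iff[THEN iffD2])
  then have "\<bar>X\<bar> + \<bar>Y\<bar> \<le> 2 * \<bar>a\<bar> + 2 * \<bar>b\<bar>" unfolding X_def Y_def a_def b_def
    by (simp add: distrib_left)
  then have XY: "X + Y \<le> 2 * \<bar>a\<bar> + 2 * \<bar>b\<bar>" using abs_ge_self[of X] abs_ge_self[of Y] by linarith
  have "Qf a b - (a^2 + b^2) / 2 = (a - b)^2 / 2" unfolding Qf_def by (simp add: power2_eq_square field_simps)
  then have Q1: "Qf a b \<ge> (a^2 + b^2) / 2" by (smt (verit) zero_le_power2 divide_nonneg_nonneg)
  have Q0: "Qf a b \<ge> 0" using Q1 by (smt (verit) zero_le_power2 divide_nonneg_nonneg)
  have "P * Qf a b \<ge> 2 * Qf a b" using P Q0 by (intro mult_right_mono) auto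
  moreover have "a^2 + b^2 \<le> 2 * Qf a b" using Q1 by (simp add: field_simps)
  ultimately have Q2: "P * Qf a b \<ge> a^2 + b^2" by (rule order_trans[rotated])
  have sa: "a^2 - 3 * \<bar>a\<bar> \<ge> -9/4"
  proof -
    have "(\<bar>a\<bar> - 3/2)^2 = a^2 - 3 * \<bar>a\<bar> + 9/4"
      by (simp add: power2_eq_square algebra_simps)
    then show ?thesis using zero_le_power2[of "\<bar>a\<bar> - 3/2"] by linarith
  qed
  have sb: "b^2 - 3 * \<bar>b\<bar> \<ge> -9/4"
  proof -
    have "(\<bar>b\<bar> - 3/2)^2 = b^2 - 3 * \<bar>b\<bar> + 9/4"
      by (simp add: power2_eq_square algebra_simps)
    then show ?thesis using zero_le_power2[of "\<bar>b\<bar> - 3/2"] by linarith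
  qed
  have "1/P > 0" using P by simp
  then have "P * Qf (X - 1/P) (Y - 1/P) \<ge> \<bar>a\<bar> + \<bar>b\<bar> - 9/2"
  proof -
    have e1: "P * Qf (X - 1/P) (Y - 1/P) = P * Qf a b - X - Y + 1/P" using id QQ by simp
    define K where "K = P * Qf a b"
    define I where "I = 1/P"
    have "P * Qf (X - 1/P) (Y - 1/P) = K - X - Y + I" using e1 unfolding K_def I_def .
    moreover have "I > 0" "a^2 + b^2 \<le> K" unfolding I_def K_def using \<open>1/P > 0\<close> Q2 by auto
    ultimately show ?thesis using XY sa sb
      by linarith
  qed
  then show ?thesis unfolding P_def X_def Y_def a_def b_def .
qed


lemma piece_summable:
  fixes p :: int and \<tau> :: complex and r1 r2 :: int
  assumes p: "p \<ge> 2" and tau: "Im \<tau> > 0" and t: "good t"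
  shows "(\<lambda>m. of_int (min (fst m) (snd m)) * wi \<tau> p (t (fst m + r1, snd m + r2))) summable_on S2"
proof -
  define c where "c = 2 * pi * Im \<tau>"
  have c: "c > 0" using tau by (simp add: c_def)
  define K0 where "K0 = \<bar>real_of_int r1\<bar> + \<bar>real_of_int r2\<bar> + 9/2"
  let ?B = "\<lambda>m::int\<times>int. exp (c * K0) * (real_of_int (fst m) * exp (- c * real_of_int (fst m)) * exp (- c * real_of_int (snd m)))"
  have Bs: "?B summable_on S2"
    by (rule summable_on_cmult_right[OF bound_summable[OF c]])
  have le: "norm (of_int (min (fst m) (snd m)) * wi \<tau> p (t (fst m + r1, snd m + r2))) \<le> ?B m"
    if m: "m \<in> S2" for m
  proof -
    obtain m1 m2 where mm: "m = (m1, m2)" by (cases m)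
    have m1: "m1 \<ge> 1" and m2: "m2 \<ge> 1" using m by (auto simp: S2_def mm)
    define E where "E = of_int p * Qf (of_int (fst (t (m1 + r1, m2 + r2))) - 1 / of_int p)
                     (of_int (snd (t (m1 + r1, m2 + r2))) - 1 / of_int p)"
    have E1: "E \<ge> \<bar>real_of_int (m1 + r1)\<bar> + \<bar>real_of_int (m2 + r2)\<bar> - 9/2"
      using expo_bound[OF p t, of "(m1 + r1, m2 + r2)"] by (simp add: E_def)
    have "\<bar>real_of_int (m1 + r1)\<bar> \<ge> real_of_int m1 - \<bar>real_of_int r1\<bar>"
         "\<bar>real_of_int (m2 + r2)\<bar> \<ge> real_of_int m2 - \<bar>real_of_int r2\<bar>" by auto
    then have E2: "E \<ge> real_of_int m1 + real_of_int m2 - K0" using E1 unfolding K0_def by linarith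
    have nw: "norm (wi \<tau> p (t (m1 + r1, m2 + r2))) = exp (- c * E)"
      by (simp add: wi_def norm_qpow E_def c_def)
    have "exp (- c * E) \<le> exp (- c * (real_of_int m1 + real_of_int m2 - K0))"
      using E2 c by simp
    also have "\<dots> = exp (c * K0) * (exp (- c * m1) * exp (- c * m2))"
      by (simp add: exp_add[symmetric] algebra_simps)
    finally have ew: "exp (- c * E) \<le> exp (c * K0) * (exp (- c * m1) * exp (- c * m2))" .
    have mn: "norm (of_int (min m1 m2) :: complex) \<le> real_of_int m1"
      using m1 m2 by (simp add: min_def)
    have "norm (of_int (min m1 m2) * wi \<tau> p (t (m1 + r1, m2 + r2)))
        = norm (of_int (min m1 m2) :: complex) * exp (- c * E)" by (simp add: norm_mult nw)
    also have "\<dots> \<le> real_of_int m1 * (exp (c * K0) * (exp (- c * m1) * exp (- c * m2)))"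
      by (rule mult_mono[OF mn ew]) (use m1 in auto)
    finally show ?thesis by (simp add: mm algebra_simps)
  qed
  have "(\<lambda>m. norm (of_int (min (fst m) (snd m)) * wi \<tau> p (t (fst m + r1, snd m + r2)))) summable_on S2"
    by (rule Infinite_Sum.abs_summable_on_comparison_test'[OF Bs le])
  then show ?thesis by (rule abs_summable_summable)
qed


lemma good_id: "good id" and good_s2: "good s2" and good_s3: "good s3" and good_s4: "good s4"
  and good_s5: "good s5" and good_s6: "good s6"
  unfolding good_def s2_def s3_def s4_def s5_def s6_def Qf_def
  by (auto simp: power2_eq_square algebra_simps)

lemma my_has_sum_diff:
  fixes f g :: "'a \<Rightarrow> complex"
  assumes "(f has_sum a) A" "(g has_sum b) A"
  shows "((\<lambda>x. f x - g x) has_sum (a - b)) A"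
proof -
  have "((\<lambda>x. - g x) has_sum (- b)) A" using assms(2) by (simp add: has_sum_uminus)
  from has_sum_add[OF assms(1) this] show ?thesis by simp
qed

lemma piece_has_sum:
  fixes p :: int and \<tau> :: complex and r :: "int \<times> int"
  assumes st: "\<And>n. t (s n) = n" and ts: "\<And>m. s (t m) = m"
    and H: "((\<lambda>m. of_int (min (fst m) (snd m)) * wi \<tau> p (t (fst m + fst r, snd m + snd r))) has_sum X) S2"
  shows "((\<lambda>n. wi \<tau> p n * of_int (Ke (sh (s n)) r)) has_sum X) UNIV"
proof -
  let ?h = "\<lambda>m. wi \<tau> p (t m) * of_int (Kf (fst m - 1 - fst r) (snd m - 1 - snd r))"
  define T where "T = {m :: int \<times> int. fst m - fst r \<ge> 1 \<and> snd m - snd r \<ge> 1}"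
  have "(?h has_sum X) T"
  proof (subst has_sum_reindex_bij_witness[symmetric, where S = S2 and i = "\<lambda>m. (fst m - fst r, snd m - snd r)"
        and j = "\<lambda>m. (fst m + fst r, snd m + snd r)" and s' = X])
    show "((\<lambda>m. of_int (min (fst m) (snd m)) * wi \<tau> p (t (fst m + fst r, snd m + snd r))) has_sum X) S2"
      by (rule H)
    fix a assume "a \<in> S2"
    then show "?h (fst a + fst r, snd a + snd r) = of_int (min (fst a) (snd a)) * wi \<tau> p (t (fst a + fst r, snd a + snd r))"
      by (simp add: S2_def Kf_def min_def)
  qed (auto simp: S2_def T_def)
  then have "(?h has_sum X) UNIV"
    by (subst has_sum_cong_neutral[where T = T]) (auto simp: T_def Kf_def)
  then show ?thesis
    by (subst has_sum_reindex_bij_witness[where S = UNIV and T = UNIV and i = t and j = s and h = ?h and s' = X])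
       (auto simp: st ts Ke_def sh_def algebra_simps)
qed


lemma qpow_add: "qpow \<tau> a * qpow \<tau> b = qpow \<tau> (a + b)"
  by (simp add: qpow_def exp_add[symmetric] algebra_simps)

lemma wi_s:
  fixes p :: int and v :: "int \<times> int" assumes p: "p \<noteq> 0"
  defines "x \<equiv> real_of_int (fst v)" and "y \<equiv> real_of_int (snd v)"
  shows "wi \<tau> p (s2 v) = wi \<tau> p v * qpow \<tau> (2 * x - y)"
    and "wi \<tau> p (s3 v) = wi \<tau> p v * qpow \<tau> (2 * y - x)"
    and "wi \<tau> p (s5 v) = wi \<tau> p v * qpow \<tau> (3 * x)"
    and "wi \<tau> p (s4 v) = wi \<tau> p v * qpow \<tau> (3 * y)"
    and "wi \<tau> p (s6 v) = wi \<tau> p v * qpow \<tau> (2 * x + 2 * y)"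
  using p unfolding wi_def qpow_add s2_def s3_def s4_def s5_def s6_def x_def y_def
  by (auto simp: Qf_def field_simps power2_eq_square intro!: arg_cong[where f = "qpow \<tau>"])

lemma comb6:
  fixes f1 f2 f3 f4 f5 f6 :: "'a \<Rightarrow> complex"
  assumes "(f1 has_sum a1) A" "(f2 has_sum a2) A" "(f3 has_sum a3) A" "(f4 has_sum a4) A"
    "(f5 has_sum a5) A" "(f6 has_sum a6) A"
  shows "((\<lambda>x. f1 x - f2 x - f3 x + f4 x + f5 x - f6 x) has_sum (a1 - a2 - a3 + a4 + a5 - a6)) A"
  by (intro my_has_sum_diff has_sum_add assms)

lemma inv_s: "s2 (s2 n) = n" "s3 (s3 n) = n" "s4 (s5 n) = n" "s5 (s4 n) = n" "s6 (s6 n) = n"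
  by (auto simp: s2_def s3_def s4_def s5_def s6_def)


theorem proposition3p2:
  fixes p :: int and \<tau> :: complex and r :: "int \<times> int"
  assumes "p \<ge> 2" and "Im \<tau> > 0"
  shows "coeffF p \<tau> r = GG p (of_int (fst r), of_int (snd r)) \<tau>"
proof -
  have p0: "p \<noteq> 0" using assms(1) by simp
  define H where "H = (\<lambda>t m. of_int (min (fst m) (snd m)) * wi \<tau> p (t (fst m + fst r, snd m + snd r)))"
  define X where "X = (\<lambda>t. infsum (H t) S2)"
  have hs: "(H t has_sum X t) S2" if "good t" for t
    unfolding X_def H_def using piece_summable[OF assms that] by (simp add: summable_iff_has_sum_infsum[symmetric])
  have h1: "(H id has_sum X id) S2" by (rule hs[OF good_id])
  have h2: "(H s2 has_sum X s2) S2" by (rule hs[OF good_s2])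
  have h3: "(H s3 has_sum X s3) S2" by (rule hs[OF good_s3])
  have h4: "(H s4 has_sum X s4) S2" by (rule hs[OF good_s4])
  have h5: "(H s5 has_sum X s5) S2" by (rule hs[OF good_s5])
  have h6: "(H s6 has_sum X s6) S2" by (rule hs[OF good_s6])
  let ?tot = "X id - X s2 - X s3 + X s5 + X s4 - X s6"
  have l1: "((\<lambda>n. wi \<tau> p n * of_int (Ke (sh (id n)) r)) has_sum X id) UNIV"
    by (rule piece_has_sum[where t=id and s=id, OF _ _ h1[unfolded H_def]]) simp_all
  have l2: "((\<lambda>n. wi \<tau> p n * of_int (Ke (sh (s2 n)) r)) has_sum X s2) UNIV"
    by (rule piece_has_sum[where t=s2 and s=s2, OF inv_s(1) inv_s(1) h2[unfolded H_def]])
  have l3: "((\<lambda>n. wi \<tau> p n * of_int (Ke (sh (s3 n)) r)) has_sum X s3) UNIV"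
    by (rule piece_has_sum[where t=s3 and s=s3, OF inv_s(2) inv_s(2) h3[unfolded H_def]])
  have l4: "((\<lambda>n. wi \<tau> p n * of_int (Ke (sh (s4 n)) r)) has_sum X s5) UNIV"
    by (rule piece_has_sum[where t=s5 and s=s4, OF inv_s(4) inv_s(3) h5[unfolded H_def]])
  have l5: "((\<lambda>n. wi \<tau> p n * of_int (Ke (sh (s5 n)) r)) has_sum X s4) UNIV"
    by (rule piece_has_sum[where t=s4 and s=s5, OF inv_s(3) inv_s(4) h4[unfolded H_def]])
  have l6: "((\<lambda>n. wi \<tau> p n * of_int (Ke (sh (s6 n)) r)) has_sum X s6) UNIV"
    by (rule piece_has_sum[where t=s6 and s=s6, OF inv_s(5) inv_s(5) h6[unfolded H_def]])
  have eqL: "(\<lambda>n. wi \<tau> p n * of_int (Lp n r)) = (\<lambda>n. wi \<tau> p n * of_int (Ke (sh (id n)) r)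
     - wi \<tau> p n * of_int (Ke (sh (s2 n)) r) - wi \<tau> p n * of_int (Ke (sh (s3 n)) r)
     + wi \<tau> p n * of_int (Ke (sh (s4 n)) r) + wi \<tau> p n * of_int (Ke (sh (s5 n)) r)
     - wi \<tau> p n * of_int (Ke (sh (s6 n)) r))"
    by (rule ext) (simp only: Lp_def of_int_add of_int_diff distrib_left right_diff_distrib id_apply)
  have "((\<lambda>n. wi \<tau> p n * of_int (Lp n r)) has_sum ?tot) UNIV"
    unfolding eqL by (rule comb6[OF l1 l2 l3 l4 l5 l6])
  then have L: "coeffF p \<tau> r = ?tot"
    unfolding coeffF_def summandF_eq wi_def by (rule infsumI)
  have hc: "((\<lambda>m. H id m - H s2 m - H s3 m + H s5 m + H s4 m - H s6 m) has_sum ?tot) S2"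
    by (rule comb6[OF h1 h2 h3 h5 h4 h6])
  have eqG: "(\<lambda>m. H id m - H s2 m - H s3 m + H s5 m + H s4 m - H s6 m) = (\<lambda>m.
      (let x = of_int (fst m) + fst (real_of_int (fst r), real_of_int (snd r));
           y = of_int (snd m) + snd (real_of_int (fst r), real_of_int (snd r)) in
        of_int (min (fst m) (snd m))
        * qpow \<tau> (of_int p * Qf (x - 1 / of_int p) (y - 1 / of_int p))
        * (1 - qpow \<tau> (2 * x - y) - qpow \<tau> (2 * y - x)
             + qpow \<tau> (3 * x) + qpow \<tau> (3 * y) - qpow \<tau> (2 * x + 2 * y))))"
    unfolding H_def wi_s[OF p0] Let_def by (rule ext) (simp add: wi_def algebra_simps)
  have "GG p (of_int (fst r), of_int (snd r)) \<tau> = ?tot"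
    unfolding GG_def by (rule infsumI) (use hc[unfolded eqG S2_def] in simp)
  with L show ?thesis by simp
qed

end
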